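(* Let $\mathcal D$ consist of $n$ i.i.d. triples $(x,a,y)$ with $x\sim d_0$, $a$ uniform on $\mathcal A$, $y$ the feedback, and let $\widehat V_{\mathcal D}(\pi,\psi)=\frac1n\sum_{\mathcal D}K\psi(y)\pi(a|x)$, $\widehat V_{\mathcal D}(\pi_u,\psi)=\frac1n\sum_{\mathcal D}\psi(y)$, and $(\hat\pi_{\mathcal D},\hat\psi_{\mathcal D})\in\arg\max_{(\pi,\psi)\in\Pi\times\Psi}\widehat V_{\mathcal D}(\pi,\psi)-\widehat V_{\mathcal D}(\pi_u,\psi)$. Assume Assumption 1 and that for some $\varepsilon_{\mathcal D}\ge0$ the uniform deviation bound $|(\widehat V_{\mathcal D}(\pi,\psi)-\widehat V_{\mathcal D}(\pi_u,\psi))-(V(\pi,\psi)-V(\pi_u,\psi))|\le K\varepsilon_{\mathcal D}$ holds for all $(\pi,\psi)\in\Pi\times\Psi$ (with $\varepsilon_{\mathcal D}=\sqrt{\iota/(2n)}$, $\iota\ge\log\frac{2|\Pi||\Psi|}{\delta}$, this holds with probability at least $1-\delta$). If $$\widehat V_{\mathcal D}(\hat\pi_{\mathcal D},\hat\psi_{\mathcal D})-\widehat V_{\mathcal D}(\pi_u,\hat\psi_{\mathcal D})>V(\pi_u)+K\varepsilon_{\mathcal D},$$ then $V(\hat\pi_{\mathcal D})\ge V(\pi^\star)-\frac{2K\varepsilon_{\mathcal D}}{\Delta\psi^\star}$.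
   Context: IGL setting: contexts $x\sim d_0$, finite action set $\mathcal A$ with $|\mathcal A|=K$, latent reward $r\in\{0,1\}$ and feedback $y\in\mathcal Y$ drawn given $(x,a)$; $R(x,a)=\mathbb E[r|x,a]$, $V(\pi)=\mathbb E_{x\sim d_0,a\sim\pi(\cdot|x)}[R(x,a)]$, $V(\pi,\psi)=\mathbb E_{x\sim d_0,a\sim\pi(\cdot|x)}[\psi(y)]$ for decoders $\psi:\mathcal Y\to[0,1]$. $\Pi$, $\Psi$ finite classes. Assumption 1: there are distributions $Q_0,Q_1$ on $\mathcal Y$ with $y\mid(x,a,r)\sim Q_r$; $\Delta\psi:=\mathbb E_{Q_1}[\psi]-\mathbb E_{Q_0}[\psi]$. $\pi_u$ uniform policy. $\pi^\star\in\arg\max_{\pi\in\Pi}V(\pi)$, $\psi^\star\in\arg\max_{\psi\in\Psi}\Delta\psi$, $\Delta\psi^\star=\Delta(\psi^\star)$. *)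

theory Defs
  imports "HOL-Probability.Probability"
begin

text \<open>Contexts of type 'x with law d0; finite action set A (K = card A);
  for each context x and action a, J x a is the joint law of the latent reward
  r (a bool: True = 1, False = 0) and the feedback y (in the measurable space Y).\<close>

definition Rfun :: "('x \<Rightarrow> 'a \<Rightarrow> (bool \<times> 'y) measure) \<Rightarrow> 'y measure \<Rightarrow> 'x \<Rightarrow> 'a \<Rightarrow> real" where
  "Rfun J Y x a = measure (J x a) ({True} \<times> space Y)"

definition igl_model ::
  "'x measure \<Rightarrow> 'a set \<Rightarrow> 'y measure \<Rightarrow> ('x \<Rightarrow> 'a \<Rightarrow> (bool \<times> 'y) measure) \<Rightarrow> bool" where
  "igl_model d0 A Y J \<longleftrightarrow>
     prob_space d0 \<and> finite A \<and> A \<noteq> {} \<and>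
     (\<forall>x\<in>space d0. \<forall>a\<in>A. prob_space (J x a) \<and>
         sets (J x a) = sets (count_space UNIV \<Otimes>\<^sub>M Y)) \<and>
     (\<forall>a\<in>A. (\<lambda>x. Rfun J Y x a) \<in> borel_measurable d0)"

text \<open>Assumption 1: y | (x,a,r) ~ Q_r.\<close>
definition assumption1 ::
  "'x measure \<Rightarrow> 'a set \<Rightarrow> 'y measure \<Rightarrow> ('x \<Rightarrow> 'a \<Rightarrow> (bool \<times> 'y) measure)
     \<Rightarrow> 'y measure \<Rightarrow> 'y measure \<Rightarrow> bool" where
  "assumption1 d0 A Y J Q0 Q1 \<longleftrightarrow>
     prob_space Q0 \<and> prob_space Q1 \<and> sets Q0 = sets Y \<and> sets Q1 = sets Y \<and>
     (\<forall>x\<in>space d0. \<forall>a\<in>A. \<forall>b. \<forall>B\<in>sets Y.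
        measure (J x a) ({b} \<times> B) =
          measure (J x a) ({b} \<times> space Y) * measure (if b then Q1 else Q0) B)"

definition policy :: "'x measure \<Rightarrow> 'a set \<Rightarrow> ('x \<Rightarrow> 'a \<Rightarrow> real) \<Rightarrow> bool" where
  "policy d0 A \<pi> \<longleftrightarrow> (\<forall>x. \<forall>a\<in>A. 0 \<le> \<pi> x a) \<and> (\<forall>x. (\<Sum>a\<in>A. \<pi> x a) = 1) \<and>
      (\<forall>a\<in>A. (\<lambda>x. \<pi> x a) \<in> borel_measurable d0)"

definition decoder :: "'y measure \<Rightarrow> ('y \<Rightarrow> real) \<Rightarrow> bool" where
  "decoder Y \<psi> \<longleftrightarrow> \<psi> \<in> borel_measurable Y \<and> (\<forall>y. 0 \<le> \<psi> y \<and> \<psi> y \<le> 1)"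

definition unif_policy :: "'a set \<Rightarrow> 'x \<Rightarrow> 'a \<Rightarrow> real" where
  "unif_policy A = (\<lambda>x a. 1 / real (card A))"

definition Vpol :: "'x measure \<Rightarrow> 'a set \<Rightarrow> 'y measure \<Rightarrow> ('x \<Rightarrow> 'a \<Rightarrow> (bool \<times> 'y) measure)
     \<Rightarrow> ('x \<Rightarrow> 'a \<Rightarrow> real) \<Rightarrow> real" where
  "Vpol d0 A Y J \<pi> = (\<integral>x. (\<Sum>a\<in>A. \<pi> x a * Rfun J Y x a) \<partial>d0)"

definition Vdec :: "'x measure \<Rightarrow> 'a set \<Rightarrow> ('x \<Rightarrow> 'a \<Rightarrow> (bool \<times> 'y) measure)
     \<Rightarrow> ('x \<Rightarrow> 'a \<Rightarrow> real) \<Rightarrow> ('y \<Rightarrow> real) \<Rightarrow> real" where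
  "Vdec d0 A J \<pi> \<psi> = (\<integral>x. (\<Sum>a\<in>A. \<pi> x a * (\<integral>p. \<psi> (snd p) \<partial>(J x a))) \<partial>d0)"

definition Delta :: "'y measure \<Rightarrow> 'y measure \<Rightarrow> ('y \<Rightarrow> real) \<Rightarrow> real" where
  "Delta Q0 Q1 \<psi> = (\<integral>y. \<psi> y \<partial>Q1) - (\<integral>y. \<psi> y \<partial>Q0)"

definition Vhat :: "'a set \<Rightarrow> ('x \<times> 'a \<times> 'y) list \<Rightarrow> ('x \<Rightarrow> 'a \<Rightarrow> real) \<Rightarrow> ('y \<Rightarrow> real) \<Rightarrow> real" where
  "Vhat A D \<pi> \<psi> =
     sum_list (map (\<lambda>(x, a, y). real (card A) * \<psi> y * \<pi> x a) D) / real (length D)"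

end

theory Submission
  imports Defs
begin

lemma snd_part:
  fixes M :: "(bool \<times> 'y) measure" and Y Q :: "'y measure" and \<psi> :: "'y \<Rightarrow> real"
  assumes M: "prob_space M" and sM: "sets M = sets (count_space UNIV \<Otimes>\<^sub>M Y)"
    and Q: "prob_space Q" and sQ: "sets Q = sets Y"
    and split: "\<forall>B\<in>sets Y. measure M ({b} \<times> B) = measure M ({b} \<times> space Y) * measure Q B"
    and psi: "\<psi> \<in> borel_measurable Y"
  shows "(\<integral>p. indicator ({b} \<times> space Y) p * \<psi> (snd p) \<partial>M)
       = measure M ({b} \<times> space Y) * (\<integral>y. \<psi> y \<partial>Q)"
proof -
  interpret M: prob_space M by fact
  interpret Q: prob_space Q by fact
  define S where "S = {b} \<times> space Y"
  define r where "r = measure M S"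
  have S: "S \<in> sets M" unfolding S_def sM by (rule pair_measureI) auto
  have sndm: "snd \<in> measurable M Y"
    using measurable_snd[of "count_space UNIV" Y] measurable_cong_sets[OF sM refl] by blast
  have spM: "space M = UNIV \<times> space Y"
    using sets_eq_imp_space_eq[OF sM] by (simp add: space_pair_measure)
  define N where "N = density M (\<lambda>p. ennreal (indicator S p))"
  have sN: "sets N = sets M" unfolding N_def by simp
  have sndN: "snd \<in> measurable N Y" using sndm measurable_cong_sets[OF sN refl] by blast
  have indm: "(indicator S :: _ \<Rightarrow> real) \<in> borel_measurable M" using S by simp
  have eq: "distr N Y snd = density Q (\<lambda>_. ennreal r)"
  proof (rule measure_eqI)
    show "sets (distr N Y snd) = sets (density Q (\<lambda>_. ennreal r))" using sQ by simp
  next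
    fix B assume "B \<in> sets (distr N Y snd)"
    hence B: "B \<in> sets Y" by simp
    have BM: "snd -` B \<inter> space M \<in> sets M" using sndm B by (simp add: measurable_sets)
    have "emeasure (distr N Y snd) B = emeasure N (snd -` B \<inter> space N)"
      using emeasure_distr[OF sndN B] .
    also have "\<dots> = emeasure N (snd -` B \<inter> space M)" unfolding N_def by simp
    also have "\<dots> = (\<integral>\<^sup>+ p. ennreal (indicator S p) * indicator (snd -` B \<inter> space M) p \<partial>M)"
      unfolding N_def using BM S by (subst emeasure_density) auto
    also have "\<dots> = (\<integral>\<^sup>+ p. indicator ({b} \<times> B) p \<partial>M)"
      using sets.sets_into_space[OF B]
      by (intro nn_integral_cong) (auto simp: S_def spM indicator_def)
    also have "\<dots> = emeasure M ({b} \<times> B)"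
    proof -
      have "{b} \<times> B \<in> sets M" unfolding sM using B by (intro pair_measureI) auto
      thus ?thesis by simp
    qed
    also have "\<dots> = ennreal (measure M ({b} \<times> B))" by (simp add: M.emeasure_eq_measure)
    also have "\<dots> = ennreal (r * measure Q B)"
    proof -
      have "measure M ({b} \<times> B) = measure M ({b} \<times> space Y) * measure Q B" using split B by blast
      thus ?thesis unfolding r_def S_def by (rule arg_cong)
    qed
    also have "\<dots> = ennreal r * emeasure Q B"
      by (simp add: Q.emeasure_eq_measure ennreal_mult r_def)
    also have "\<dots> = emeasure (density Q (\<lambda>_. ennreal r)) B"
      using B sQ by (simp add: emeasure_density_const)
    finally show "emeasure (distr N Y snd) B = emeasure (density Q (\<lambda>_. ennreal r)) B" .
  qed
  have "(\<integral>p. indicator S p * \<psi> (snd p) \<partial>M) = (\<integral>p. \<psi> (snd p) \<partial>N)"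
    unfolding N_def using integral_density[of "\<lambda>p. \<psi> (snd p)" M "indicator S"] indm psi sndm
    by simp
  also have "\<dots> = (\<integral>y. \<psi> y \<partial>distr N Y snd)" using integral_distr[OF sndN psi] by simp
  also have "\<dots> = (\<integral>y. \<psi> y \<partial>density Q (\<lambda>_. ennreal r))" using eq by simp
  also have "\<dots> = (\<integral>y. r * \<psi> y \<partial>Q)"
  proof -
    have psiQ: "\<psi> \<in> borel_measurable Q" using psi measurable_cong_sets[OF sQ refl] by blast
    have "r \<ge> 0" unfolding r_def by simp
    thus ?thesis using integral_density[OF psiQ, of "\<lambda>_. r"] by simp
  qed
  also have "\<dots> = r * (\<integral>y. \<psi> y \<partial>Q)" by simp
  finally show ?thesis by (simp add: S_def r_def)
qed



lemma dec_int:
  fixes M :: "(bool \<times> 'y) measure" and Y Q0 Q1 :: "'y measure" and \<psi> :: "'y \<Rightarrow> real"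
  assumes M: "prob_space M" and sM: "sets M = sets (count_space UNIV \<Otimes>\<^sub>M Y)"
    and Q0: "prob_space Q0" and sQ0: "sets Q0 = sets Y"
    and Q1: "prob_space Q1" and sQ1: "sets Q1 = sets Y"
    and split: "\<forall>b. \<forall>B\<in>sets Y. measure M ({b} \<times> B) = measure M ({b} \<times> space Y) * measure (if b then Q1 else Q0) B"
    and psi: "\<psi> \<in> borel_measurable Y" and bnd: "\<forall>y. 0 \<le> \<psi> y \<and> \<psi> y \<le> 1"
  shows "(\<integral>p. \<psi> (snd p) \<partial>M) = (\<integral>y. \<psi> y \<partial>Q0)
           + measure M ({True} \<times> space Y) * ((\<integral>y. \<psi> y \<partial>Q1) - (\<integral>y. \<psi> y \<partial>Q0))"
proof -
  interpret M: prob_space M by fact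
  define T where "T = {True} \<times> space Y"
  define F where "F = {False} \<times> space Y"
  have T: "T \<in> sets M" unfolding T_def sM by (rule pair_measureI) auto
  have F: "F \<in> sets M" unfolding F_def sM by (rule pair_measureI) auto
  have spM: "space M = UNIV \<times> space Y"
    using sets_eq_imp_space_eq[OF sM] by (simp add: space_pair_measure)
  have sndm: "snd \<in> measurable M Y"
    using measurable_snd[of "count_space UNIV" Y] measurable_cong_sets[OF sM refl] by blast
  have pm: "(\<lambda>p. \<psi> (snd p)) \<in> borel_measurable M" using sndm psi by measurable
  have iT: "integrable M (\<lambda>p. indicator T p * \<psi> (snd p))"
    by (rule M.integrable_const_bound[where B=1]) (use T pm bnd in \<open>auto simp: indicator_def\<close>)
  have iF: "integrable M (\<lambda>p. indicator F p * \<psi> (snd p))"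
    by (rule M.integrable_const_bound[where B=1]) (use F pm bnd in \<open>auto simp: indicator_def\<close>)
  have "(\<integral>p. \<psi> (snd p) \<partial>M) = (\<integral>p. indicator T p * \<psi> (snd p) + indicator F p * \<psi> (snd p) \<partial>M)"
    by (intro Bochner_Integration.integral_cong) (auto simp: spM T_def F_def indicator_def)
  also have "\<dots> = (\<integral>p. indicator T p * \<psi> (snd p) \<partial>M) + (\<integral>p. indicator F p * \<psi> (snd p) \<partial>M)"
    using iT iF by simp
  also have "\<dots> = measure M T * (\<integral>y. \<psi> y \<partial>Q1) + measure M F * (\<integral>y. \<psi> y \<partial>Q0)"
  proof -
    have sT: "\<forall>B\<in>sets Y. measure M ({True} \<times> B) = measure M ({True} \<times> space Y) * measure Q1 B"
      using spec[OF split, of True] by (simp only: if_True)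
    have sF: "\<forall>B\<in>sets Y. measure M ({False} \<times> B) = measure M ({False} \<times> space Y) * measure Q0 B"
      using spec[OF split, of False] by (simp only: if_False)
    show ?thesis
      using snd_part[OF M sM Q1 sQ1 sT psi] snd_part[OF M sM Q0 sQ0 sF psi]
      by (simp only: T_def F_def)
  qed
  also have "measure M F = 1 - measure M T"
  proof -
    have "measure M (T \<union> F) = measure M T + measure M F"
      using T F by (intro measure_Union) (auto simp: T_def F_def M.emeasure_eq_measure)
    moreover have "T \<union> F = space M" by (auto simp: T_def F_def spM)
    ultimately show ?thesis using M.prob_space by simp
  qed
  finally show ?thesis by (simp add: T_def algebra_simps)
qed

lemma Rfun_bnd:
  assumes "prob_space (J x a)"
  shows "0 \<le> Rfun J Y x a \<and> Rfun J Y x a \<le> 1"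
  using prob_space.prob_le_1[OF assms] by (simp add: Rfun_def)

lemma unif_policy: "finite A \<Longrightarrow> A \<noteq> {} \<Longrightarrow> policy d0 A (unif_policy A)"
  by (simp add: policy_def unif_policy_def)

lemma int_bnd:
  assumes "prob_space Q" "sets Q = sets Y" "decoder Y \<psi>"
  shows "0 \<le> (\<integral>y. \<psi> y \<partial>Q) \<and> (\<integral>y. \<psi> y \<partial>Q) \<le> 1"
proof -
  interpret Q: prob_space Q by fact
  have m: "\<psi> \<in> borel_measurable Q" using assms(3) measurable_cong_sets[OF assms(2) refl]
    by (auto simp: decoder_def)
  have b: "\<forall>y. 0 \<le> \<psi> y \<and> \<psi> y \<le> 1" using assms(3) by (simp add: decoder_def)
  have i: "integrable Q \<psi>" by (rule Q.integrable_const_bound[where B=1]) (use m b in auto)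
  have "(\<integral>y. \<psi> y \<partial>Q) \<le> (\<integral>y. 1 \<partial>Q)" using i b by (intro integral_mono) auto
  moreover have "0 \<le> (\<integral>y. \<psi> y \<partial>Q)" using b by (intro integral_nonneg_AE) auto
  ultimately show ?thesis by (simp add: Q.prob_space)
qed

lemma vdec_eq:
  assumes model: "igl_model d0 A Y J" and A1: "assumption1 d0 A Y J Q0 Q1"
    and pol: "policy d0 A \<pi>" and dec: "decoder Y \<psi>"
  shows "Vdec d0 A J \<pi> \<psi> = (\<integral>y. \<psi> y \<partial>Q0) + Vpol d0 A Y J \<pi> * Delta Q0 Q1 \<psi>"
    and "0 \<le> Vpol d0 A Y J \<pi>"
proof -
  interpret d: prob_space d0 using model by (simp add: igl_model_def)
  define E0 where "E0 = (\<integral>y. \<psi> y \<partial>Q0)"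
  define f where "f x = (\<Sum>a\<in>A. \<pi> x a * Rfun J Y x a)" for x
  have fin: "finite A" using model by (simp add: igl_model_def)
  have pb: "\<And>x a. a \<in> A \<Longrightarrow> 0 \<le> \<pi> x a" and ps: "\<And>x. (\<Sum>a\<in>A. \<pi> x a) = 1"
    using pol by (auto simp: policy_def)
  have Rb: "\<And>x a. x \<in> space d0 \<Longrightarrow> a \<in> A \<Longrightarrow> 0 \<le> Rfun J Y x a \<and> Rfun J Y x a \<le> 1"
  proof -
    fix x a assume "x \<in> space d0" "a \<in> A"
    hence "prob_space (J x a)" using model by (simp add: igl_model_def)
    thus "0 \<le> Rfun J Y x a \<and> Rfun J Y x a \<le> 1" by (rule Rfun_bnd)
  qed
  have fm: "f \<in> borel_measurable d0" unfolding f_def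
    using model pol by (intro borel_measurable_sum borel_measurable_times) (auto simp: igl_model_def policy_def)
  have f0: "\<And>x. x \<in> space d0 \<Longrightarrow> 0 \<le> f x"
    unfolding f_def using pb Rb by (intro sum_nonneg) auto
  have f1: "\<And>x. x \<in> space d0 \<Longrightarrow> f x \<le> 1"
  proof -
    fix x assume x: "x \<in> space d0"
    have "f x \<le> (\<Sum>a\<in>A. \<pi> x a)" unfolding f_def
      using pb Rb[OF x] by (intro sum_mono) (simp add: mult_left_le)
    thus "f x \<le> 1" using ps by simp
  qed
  have fi: "integrable d0 f"
    by (rule d.integrable_const_bound[where B=1]) (use fm f0 f1 in auto)
  have "Vdec d0 A J \<pi> \<psi> = (\<integral>x. E0 + Delta Q0 Q1 \<psi> * f x \<partial>d0)"
    unfolding Vdec_def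
  proof (intro Bochner_Integration.integral_cong refl)
    fix x assume x: "x \<in> space d0"
    have "(\<Sum>a\<in>A. \<pi> x a * (\<integral>p. \<psi> (snd p) \<partial>J x a))
        = (\<Sum>a\<in>A. \<pi> x a * (E0 + Rfun J Y x a * Delta Q0 Q1 \<psi>))"
    proof (intro sum.cong refl)
      fix a assume a: "a \<in> A"
      have "(\<integral>p. \<psi> (snd p) \<partial>J x a) = E0 + Rfun J Y x a * Delta Q0 Q1 \<psi>"
        unfolding E0_def Rfun_def Delta_def
      proof (rule dec_int)
        show "prob_space (J x a)" "sets (J x a) = sets (count_space UNIV \<Otimes>\<^sub>M Y)"
          using model x a unfolding igl_model_def by blast+
        show "prob_space Q0" "sets Q0 = sets Y" "prob_space Q1" "sets Q1 = sets Y"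
          using A1 unfolding assumption1_def by blast+
        show "\<forall>b. \<forall>B\<in>sets Y. measure (J x a) ({b} \<times> B) = measure (J x a) ({b} \<times> space Y) * measure (if b then Q1 else Q0) B"
          using A1 x a unfolding assumption1_def by blast
        show "\<psi> \<in> borel_measurable Y" "\<forall>y. 0 \<le> \<psi> y \<and> \<psi> y \<le> 1"
          using dec unfolding decoder_def by blast+
      qed
      thus "\<pi> x a * (\<integral>p. \<psi> (snd p) \<partial>J x a) = \<pi> x a * (E0 + Rfun J Y x a * Delta Q0 Q1 \<psi>)" by simp
    qed
    also have "\<dots> = E0 * (\<Sum>a\<in>A. \<pi> x a) + Delta Q0 Q1 \<psi> * f x"
      unfolding f_def by (simp add: algebra_simps sum.distrib sum_distrib_left)
    finally show "(\<Sum>a\<in>A. \<pi> x a * (\<integral>p. \<psi> (snd p) \<partial>J x a)) = E0 + Delta Q0 Q1 \<psi> * f x"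
      using ps by simp
  qed
  also have "\<dots> = E0 + Delta Q0 Q1 \<psi> * (\<integral>x. f x \<partial>d0)"
    using fi d.prob_space by simp
  finally show "Vdec d0 A J \<pi> \<psi> = (\<integral>y. \<psi> y \<partial>Q0) + Vpol d0 A Y J \<pi> * Delta Q0 Q1 \<psi>"
    by (simp add: E0_def Vpol_def f_def[abs_def] mult.commute)
  show "0 \<le> Vpol d0 A Y J \<pi>" unfolding Vpol_def using f0 unfolding f_def
    by (intro integral_nonneg_AE) auto
qed

lemma final_arith:
  fixes h u st dh ds Ke :: real
  assumes hu: "h - u > 0" and dsp: "ds > 0" and dhs: "dh \<le> ds"
    and key: "(h - u) * dh \<ge> (st - u) * ds - 2 * Ke"
  shows "st - 2 * Ke / ds \<le> h"
proof -
  have a: "(h - u) * dh \<le> (h - u) * ds" using hu dhs by (intro mult_left_mono) auto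
  have b: "(st - u) * ds - 2 * Ke \<le> (h - u) * ds" using a key by (rule order.trans[rotated])
  have c: "(st - h) * ds \<le> 2 * Ke" using b by (simp add: algebra_simps)
  have d: "st - h \<le> 2 * Ke / ds" using c dsp by (simp add: pos_le_divide_eq)
  show ?thesis using d by simp
qed

lemma final2:
  fixes a b h X Y :: real
  shows "a - b \<le> h \<Longrightarrow> a - b = X \<Longrightarrow> h = Y \<Longrightarrow> X \<le> Y"
  by simp

theorem lemma2:
  fixes d0 :: "'x measure" and A :: "'a set" and Y :: "'y measure"
    and J :: "'x \<Rightarrow> 'a \<Rightarrow> (bool \<times> 'y) measure" and Q0 Q1 :: "'y measure"
    and PiC :: "('x \<Rightarrow> 'a \<Rightarrow> real) set" and PsiC :: "('y \<Rightarrow> real) set"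
    and D :: "('x \<times> 'a \<times> 'y) list" and \<epsilon> :: real
    and \<pi>hat \<pi>star :: "'x \<Rightarrow> 'a \<Rightarrow> real" and \<psi>hat \<psi>star :: "'y \<Rightarrow> real"
  assumes model: "igl_model d0 A Y J"
    and A1: "assumption1 d0 A Y J Q0 Q1"
    and Pi_fin: "finite PiC" and Pi_pol: "\<forall>\<pi>\<in>PiC. policy d0 A \<pi>"
    and Psi_fin: "finite PsiC" and Psi_dec: "\<forall>\<psi>\<in>PsiC. decoder Y \<psi>"
    and D_data: "set D \<subseteq> space d0 \<times> A \<times> space Y"
    and hat_mem: "\<pi>hat \<in> PiC" "\<psi>hat \<in> PsiC"
    and hat_max: "\<forall>\<pi>\<in>PiC. \<forall>\<psi>\<in>PsiC.
        Vhat A D \<pi> \<psi> - Vhat A D (unif_policy A) \<psi>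
          \<le> Vhat A D \<pi>hat \<psi>hat - Vhat A D (unif_policy A) \<psi>hat"
    and star_pi: "\<pi>star \<in> PiC" "\<forall>\<pi>\<in>PiC. Vpol d0 A Y J \<pi> \<le> Vpol d0 A Y J \<pi>star"
    and star_psi: "\<psi>star \<in> PsiC" "\<forall>\<psi>\<in>PsiC. Delta Q0 Q1 \<psi> \<le> Delta Q0 Q1 \<psi>star"
    and eps_nonneg: "0 \<le> \<epsilon>"
    and deviation: "\<forall>\<pi>\<in>PiC. \<forall>\<psi>\<in>PsiC.
        \<bar>(Vhat A D \<pi> \<psi> - Vhat A D (unif_policy A) \<psi>)
          - (Vdec d0 A J \<pi> \<psi> - Vdec d0 A J (unif_policy A) \<psi>)\<bar> \<le> real (card A) * \<epsilon>"
    and cond: "Vhat A D \<pi>hat \<psi>hat - Vhat A D (unif_policy A) \<psi>hat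
        > Vpol d0 A Y J (unif_policy A) + real (card A) * \<epsilon>"
  shows "Vpol d0 A Y J \<pi>hat \<ge> Vpol d0 A Y J \<pi>star - 2 * real (card A) * \<epsilon> / Delta Q0 Q1 \<psi>star"
proof -
  let ?K = "real (card A)"
  let ?u = "unif_policy A"
  have fin: "finite A" "A \<noteq> {}" using model by (auto simp: igl_model_def)
  have upol: "policy d0 A ?u" using unif_policy[OF fin] .
  have Q: "prob_space Q0" "sets Q0 = sets Y" "prob_space Q1" "sets Q1 = sets Y"
    using A1 by (auto simp: assumption1_def)
  have Dbnd: "\<And>\<psi>. \<psi> \<in> PsiC \<Longrightarrow> -1 \<le> Delta Q0 Q1 \<psi>"
  proof -
    fix \<psi> assume "\<psi> \<in> PsiC"
    hence d: "decoder Y \<psi>" using Psi_dec by auto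
    show "-1 \<le> Delta Q0 Q1 \<psi>" using int_bnd[OF Q(1,2) d] int_bnd[OF Q(3,4) d]
      by (simp add: Delta_def)
  qed
  have diff: "\<And>\<pi> \<psi>. \<pi> \<in> PiC \<Longrightarrow> \<psi> \<in> PsiC \<Longrightarrow>
      Vdec d0 A J \<pi> \<psi> - Vdec d0 A J ?u \<psi>
        = (Vpol d0 A Y J \<pi> - Vpol d0 A Y J ?u) * Delta Q0 Q1 \<psi>"
  proof -
    fix \<pi> \<psi> assume "\<pi> \<in> PiC" "\<psi> \<in> PsiC"
    hence p: "policy d0 A \<pi>" and d: "decoder Y \<psi>" using Pi_pol Psi_dec by auto
    show "Vdec d0 A J \<pi> \<psi> - Vdec d0 A J ?u \<psi>
        = (Vpol d0 A Y J \<pi> - Vpol d0 A Y J ?u) * Delta Q0 Q1 \<psi>"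
      using vdec_eq(1)[OF model A1 p d] vdec_eq(1)[OF model A1 upol d]
      by (simp add: algebra_simps)
  qed
  define h where "h = Vpol d0 A Y J \<pi>hat"
  define u where "u = Vpol d0 A Y J ?u"
  define st where "st = Vpol d0 A Y J \<pi>star"
  define dh where "dh = Delta Q0 Q1 \<psi>hat"
  define ds where "ds = Delta Q0 Q1 \<psi>star"
  define G where "G = Vhat A D \<pi>hat \<psi>hat - Vhat A D ?u \<psi>hat"
  define Ke where "Ke = ?K * \<epsilon>"
  have ph: "policy d0 A \<pi>hat" using Pi_pol hat_mem by blast
  have dch: "decoder Y \<psi>hat" using Psi_dec hat_mem by blast
  have h0: "0 \<le> h" unfolding h_def by (rule vdec_eq(2)[OF model A1 ph dch])
  have u0: "0 \<le> u" unfolding u_def by (rule vdec_eq(2)[OF model A1 upol dch])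
  have dh1: "-1 \<le> dh" unfolding dh_def using Dbnd hat_mem by auto
  have dhs: "dh \<le> ds" unfolding dh_def ds_def using star_psi hat_mem by auto
  have Ke0: "0 \<le> Ke" unfolding Ke_def using eps_nonneg by simp
  have e1: "\<bar>G - (h - u) * dh\<bar> \<le> Ke"
  proof -
    have "\<bar>G - (Vdec d0 A J \<pi>hat \<psi>hat - Vdec d0 A J ?u \<psi>hat)\<bar> \<le> Ke"
      using deviation hat_mem unfolding G_def Ke_def by blast
    thus ?thesis unfolding diff[OF hat_mem] h_def u_def dh_def .
  qed
  have e2: "\<bar>(Vhat A D \<pi>star \<psi>star - Vhat A D ?u \<psi>star) - (st - u) * ds\<bar> \<le> Ke"
  proof -
    have "\<bar>(Vhat A D \<pi>star \<psi>star - Vhat A D ?u \<psi>star) - (Vdec d0 A J \<pi>star \<psi>star - Vdec d0 A J ?u \<psi>star)\<bar> \<le> Ke"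
      using deviation star_pi(1) star_psi(1) unfolding Ke_def by blast
    thus ?thesis unfolding diff[OF star_pi(1) star_psi(1)] st_def u_def ds_def .
  qed
  have e3: "Vhat A D \<pi>star \<psi>star - Vhat A D ?u \<psi>star \<le> G"
    using hat_max star_pi star_psi unfolding G_def by auto
  have c: "G > u + Ke" using cond unfolding G_def u_def Ke_def by simp
  define P where "P = (h - u) * dh"
  define S where "S = (st - u) * ds"
  define G2 where "G2 = Vhat A D \<pi>star \<psi>star - Vhat A D ?u \<psi>star"
  have e1': "G - P \<le> Ke \<and> P - G \<le> Ke" using e1 unfolding P_def abs_le_iff by auto
  have e2': "G2 - S \<le> Ke \<and> S - G2 \<le> Ke" using e2 unfolding S_def G2_def abs_le_iff by auto
  have e3': "G2 \<le> G" using e3 unfolding G2_def .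
  have prod: "(h - u) * dh > u" unfolding P_def[symmetric] using e1' c by linarith
  have key: "(h - u) * dh \<ge> (st - u) * ds - 2 * Ke"
    unfolding P_def[symmetric] S_def[symmetric] using e1' e2' e3' by linarith
  show ?thesis
  proof (cases "h \<ge> u")
    case True
    have hu: "h - u > 0"
    proof (rule ccontr)
      assume "\<not> h - u > 0" hence "h - u = 0" using True by linarith
      hence "(h - u) * dh = 0" by (simp only: mult_zero_left)
      thus False using prod u0 by linarith
    qed
    have dhp: "dh > 0" proof -
      have "0 < (h - u) * dh" using prod u0 by linarith
      thus ?thesis using hu zero_less_mult_pos by blast
    qed
    have dsp: "ds > 0" using dhp dhs by simp
    have f1: "st - 2 * Ke / ds \<le> h" by (rule final_arith[OF hu dsp dhs key])
    have f2: "st - 2 * Ke / ds = Vpol d0 A Y J \<pi>star - 2 * ?K * \<epsilon> / Delta Q0 Q1 \<psi>star"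
      unfolding st_def Ke_def ds_def by (simp add: mult.assoc)
    have f3: "h = Vpol d0 A Y J \<pi>hat" by (rule h_def)
    show ?thesis by (rule final2[OF f1 f2 f3])
  next
    case False
    have "(u - h) * (- dh) \<le> u"
    proof (cases "dh \<ge> 0")
      case True
      have "0 \<le> u - h" using False by simp
      moreover have "- dh \<le> 0" using True by simp
      ultimately have "(u - h) * (- dh) \<le> 0" by (rule mult_nonneg_nonpos)
      thus ?thesis using u0 by linarith
    next
      case f2: False
      have "(u - h) * (- dh) \<le> (u - h) * 1" using False dh1 by (intro mult_left_mono) auto
      thus ?thesis using h0 by simp
    qed
    hence "(h - u) * dh \<le> u" by (simp add: algebra_simps)
    thus ?thesis using prod by simp
  qed
qed

end
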